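(* Let $P$ be a finite propositional normal logic program and let $\Delta_w$ be any function assigning to each pair $(F,Q)$, where $F\subseteq \mathit{At}(P)$ and $Q$ is a Horn program with $\mathit{At}(Q)\subseteq\overline{F}$, a set $\Delta_w(F,Q)$ such that (W1) $\Delta_w(F,Q)\subseteq \overline{F}\setminus LM(Q)$, and (W2) $\Delta_w(F,Q)=\emptyset$ if and only if $\overline{F}\setminus LM(Q)=\emptyset$. Define $B_w(F)=F\cup \Delta_w(F,P_{F,T}^h)$ where $T=GL(\overline{F})$. Then for every $F$, $F\subseteq B_w(F)\subseteq B(F)$; the sequence $B_w^i(\emptyset)$, $i=0,1,2,\dots$, is contained in $F_{wfs}$ and is nondecreasing, hence there is a first $i$ with $B_w^i(\emptyset)=B_w^{i+1}(\emptyset)$; and for this $i$, $B_w^i(\emptyset)=F_{wfs}$.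
   Context: $\mathit{At}(P)$ is the set of atoms occurring in $P$ (and $\mathit{At}(Q)$ those in $Q$); for $X\subseteq \mathit{At}(P)$, $\overline{X}=\mathit{At}(P)\setminus X$. $LM(Q)$ is the least model of a Horn program $Q$. For $M\subseteq\mathit{At}(P)$, $P_M$ is obtained from $P$ by removing all rules whose bodies contain $\mathbf{not}(a)$ with $a\in M$; $P^h$ is obtained by deleting all negative literals from rule bodies; $GL(M)=LM((P_M)^h)$. $T_{wfs}=\mathrm{lfp}(GL\circ GL)$, $F_{wfs}=\overline{GL(T_{wfs})}$. For $F,T\subseteq\mathit{At}(P)$, $P_{F,T}$ is obtained from $P$ by removing all rules with head in $F$, all rules whose body contains a positive occurrence of an atom of $F$, and all rules whose body contains $\mathbf{not}(a)$ with $a\in T$; $P_{F,T}^h=(P_{F,T})^h$ (note $\mathit{At}(P_{F,T}^h)\subseteq\overline F$). $B(F)=\overline{LM(P_{F,T}^h)}$ with $T=GL(\overline F)$. $B_w^i$ denotes the $i$-fold iterate of $B_w$. *)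

theory Defs
  imports Main
begin

datatype 'a rule = Rule (head: 'a) (pos: "'a set") (neg: "'a set")

type_synonym 'a program = "'a rule set"

definition finite_program :: "'a program \<Rightarrow> bool" where
  "finite_program P \<longleftrightarrow> finite P \<and> (\<forall>r\<in>P. finite (pos r) \<and> finite (neg r))"

definition horn :: "'a program \<Rightarrow> bool" where
  "horn Q \<longleftrightarrow> (\<forall>r\<in>Q. neg r = {})"

definition At :: "'a program \<Rightarrow> 'a set" where
  "At P = (\<Union>r\<in>P. insert (head r) (pos r \<union> neg r))"

definition cmpl :: "'a program \<Rightarrow> 'a set \<Rightarrow> 'a set" where
  "cmpl P X = At P - X"

definition LM :: "'a program \<Rightarrow> 'a set" where
  "LM Q = lfp (\<lambda>X. {head r | r. r \<in> Q \<and> pos r \<subseteq> X})"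

definition reduct :: "'a program \<Rightarrow> 'a set \<Rightarrow> 'a program" where
  "reduct P M = {r \<in> P. neg r \<inter> M = {}}"

definition hornpart :: "'a program \<Rightarrow> 'a program" where
  "hornpart P = (\<lambda>r. Rule (head r) (pos r) {}) ` P"

definition GL :: "'a program \<Rightarrow> 'a set \<Rightarrow> 'a set" where
  "GL P M = LM (hornpart (reduct P M))"

definition T_wfs :: "'a program \<Rightarrow> 'a set" where
  "T_wfs P = lfp (GL P \<circ> GL P)"

definition F_wfs :: "'a program \<Rightarrow> 'a set" where
  "F_wfs P = cmpl P (GL P (T_wfs P))"

definition PFT :: "'a program \<Rightarrow> 'a set \<Rightarrow> 'a set \<Rightarrow> 'a program" where
  "PFT P F T = {r \<in> P. head r \<notin> F \<and> pos r \<inter> F = {} \<and> neg r \<inter> T = {}}"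

definition PFTh :: "'a program \<Rightarrow> 'a set \<Rightarrow> 'a set \<Rightarrow> 'a program" where
  "PFTh P F T = hornpart (PFT P F T)"

definition Bop :: "'a program \<Rightarrow> 'a set \<Rightarrow> 'a set" where
  "Bop P F = cmpl P (LM (PFTh P F (GL P (cmpl P F))))"

definition Bw :: "'a program \<Rightarrow> ('a set \<Rightarrow> 'a program \<Rightarrow> 'a set) \<Rightarrow> 'a set \<Rightarrow> 'a set" where
  "Bw P \<Delta> F = F \<union> \<Delta> F (PFTh P F (GL P (cmpl P F)))"

end

theory Submission
  imports Defs
begin

lemma LM_op_mono: "mono (\<lambda>X. {head r | r. r \<in> Q \<and> pos r \<subseteq> X})"
  by (auto simp: mono_def)

lemma LM_closed: "r \<in> Q \<Longrightarrow> pos r \<subseteq> LM Q \<Longrightarrow> head r \<in> LM Q"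
proof -
  assume a: "r \<in> Q" "pos r \<subseteq> LM Q"
  have "LM Q = {head r | r. r \<in> Q \<and> pos r \<subseteq> LM Q}"
    unfolding LM_def by (rule lfp_unfold[OF LM_op_mono])
  with a show ?thesis by blast
qed

lemma LM_heads: "x \<in> LM Q \<Longrightarrow> \<exists>r\<in>Q. x = head r \<and> pos r \<subseteq> LM Q"
proof -
  assume a: "x \<in> LM Q"
  have "LM Q = {head r | r. r \<in> Q \<and> pos r \<subseteq> LM Q}"
    unfolding LM_def by (rule lfp_unfold[OF LM_op_mono])
  with a show ?thesis by blast
qed

lemma LM_induct: "(\<And>r. r \<in> Q \<Longrightarrow> pos r \<subseteq> X \<Longrightarrow> head r \<in> X) \<Longrightarrow> LM Q \<subseteq> X"
  unfolding LM_def by (rule lfp_lowerbound) blast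

lemma LM_mono: "Q \<subseteq> Q' \<Longrightarrow> LM Q \<subseteq> LM Q'"
  by (rule LM_induct) (auto intro: LM_closed)

lemma LM_hornpart: "LM (hornpart Q) = LM Q"
proof -
  have "(\<lambda>X. {head r | r. r \<in> hornpart Q \<and> pos r \<subseteq> X}) = (\<lambda>X. {head r | r. r \<in> Q \<and> pos r \<subseteq> X})"
    unfolding hornpart_def
  proof (rule ext, rule set_eqI, rule iffI)
    fix X x assume "x \<in> {head r | r. r \<in> (\<lambda>r. Rule (head r) (pos r) {}) ` Q \<and> pos r \<subseteq> X}"
    then obtain r where "r \<in> Q" "pos r \<subseteq> X" "x = head r" by auto
    thus "x \<in> {head r | r. r \<in> Q \<and> pos r \<subseteq> X}" by blast
  next
    fix X x assume "x \<in> {head r | r. r \<in> Q \<and> pos r \<subseteq> X}"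
    then obtain r where r: "r \<in> Q" "pos r \<subseteq> X" "x = head r" by auto
    hence "Rule (head r) (pos r) {} \<in> (\<lambda>r. Rule (head r) (pos r) {}) ` Q \<and> pos (Rule (head r) (pos r) {}) \<subseteq> X \<and> x = head (Rule (head r) (pos r) {})" by simp
    thus "x \<in> {head r | r. r \<in> (\<lambda>r. Rule (head r) (pos r) {}) ` Q \<and> pos r \<subseteq> X}" by blast
  qed
  thus ?thesis unfolding LM_def by simp
qed

lemma GL_eq: "GL P M = LM (reduct P M)"
  unfolding GL_def by (simp add: LM_hornpart)

lemma GL_anti: "M \<subseteq> M' \<Longrightarrow> GL P M' \<subseteq> GL P M"
  unfolding GL_eq by (rule LM_mono) (auto simp: reduct_def)

lemma GL_At: "GL P M \<subseteq> At P"
  unfolding GL_eq using LM_heads by (fastforce simp: reduct_def At_def)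

lemma GL2_mono: "mono (GL P \<circ> GL P)"
  by (auto simp: mono_def intro!: GL_anti)

lemma Twfs_fix: "GL P (GL P (T_wfs P)) = T_wfs P"
  unfolding T_wfs_def using lfp_unfold[OF GL2_mono, of P] by simp

lemma Twfs_le: "GL P (GL P X) \<subseteq> X \<Longrightarrow> T_wfs P \<subseteq> X"
  unfolding T_wfs_def by (rule lfp_lowerbound) simp

lemma finite_At: "finite_program P \<Longrightarrow> finite (At P)"
  unfolding finite_program_def At_def by auto

lemma PFTh_props:
  assumes "finite_program P"
  shows "finite_program (PFTh P F T) \<and> horn (PFTh P F T) \<and> At (PFTh P F T) \<subseteq> cmpl P F"
  using assms unfolding finite_program_def horn_def At_def cmpl_def PFTh_def hornpart_def PFT_def
  by (auto 0 3)

lemma LM_PFTh: "LM (PFTh P F T) = LM (PFT P F T)"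
  unfolding PFTh_def by (rule LM_hornpart)

lemma LM_PFT_At: "LM (PFT P F T) \<subseteq> cmpl P F"
  using LM_heads[of _ "PFT P F T"] by (fastforce simp: PFT_def cmpl_def At_def)

theorem mainTheorem3:
  fixes P :: "'a program" and \<Delta> :: "'a set \<Rightarrow> 'a program \<Rightarrow> 'a set"
  assumes finP: "finite_program P"
    and W1: "\<And>F Q. F \<subseteq> At P \<Longrightarrow> finite_program Q \<Longrightarrow> horn Q \<Longrightarrow> At Q \<subseteq> cmpl P F \<Longrightarrow>
               \<Delta> F Q \<subseteq> cmpl P F - LM Q"
    and W2: "\<And>F Q. F \<subseteq> At P \<Longrightarrow> finite_program Q \<Longrightarrow> horn Q \<Longrightarrow> At Q \<subseteq> cmpl P F \<Longrightarrow>
               (\<Delta> F Q = {} \<longleftrightarrow> cmpl P F - LM Q = {})"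
  shows "(\<forall>F. F \<subseteq> At P \<longrightarrow> F \<subseteq> Bw P \<Delta> F \<and> Bw P \<Delta> F \<subseteq> Bop P F)
       \<and> (\<forall>i. (Bw P \<Delta> ^^ i) {} \<subseteq> F_wfs P)
       \<and> (\<forall>i. (Bw P \<Delta> ^^ i) {} \<subseteq> (Bw P \<Delta> ^^ Suc i) {})
       \<and> (\<exists>i. (Bw P \<Delta> ^^ i) {} = (Bw P \<Delta> ^^ Suc i) {})
       \<and> (\<forall>i. ((Bw P \<Delta> ^^ i) {} = (Bw P \<Delta> ^^ Suc i) {}
               \<and> (\<forall>j<i. (Bw P \<Delta> ^^ j) {} \<noteq> (Bw P \<Delta> ^^ Suc j) {}))
             \<longrightarrow> (Bw P \<Delta> ^^ i) {} = F_wfs P)"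
proof -
  define S where "S i = (Bw P \<Delta> ^^ i) {}" for i
  define U where "U = GL P (T_wfs P)"
  have UAt: "U \<subseteq> At P" unfolding U_def by (rule GL_At)
  have Fw: "F_wfs P = At P - U" unfolding F_wfs_def U_def cmpl_def by simp
  have incr: "F \<subseteq> Bw P \<Delta> F" for F unfolding Bw_def by blast
  have part1: "Bw P \<Delta> F \<subseteq> Bop P F" if F: "F \<subseteq> At P" for F
  proof -
    let ?Q = "PFTh P F (GL P (cmpl P F))"
    have D: "\<Delta> F ?Q \<subseteq> cmpl P F - LM ?Q"
      using W1[OF F] PFTh_props[OF finP] by blast
    have "F \<inter> LM ?Q = {}" using LM_PFT_At[of P F] unfolding LM_PFTh cmpl_def by blast
    thus ?thesis using D F unfolding Bw_def Bop_def cmpl_def by blast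
  qed
  have step: "Bw P \<Delta> F \<subseteq> F_wfs P" if F: "F \<subseteq> F_wfs P" for F
  proof -
    have FAt: "F \<subseteq> At P" using F Fw by blast
    define TF where "TF = GL P (cmpl P F)"
    have "U \<subseteq> cmpl P F" using F Fw UAt unfolding cmpl_def by blast
    hence TF: "TF \<subseteq> T_wfs P" unfolding TF_def using GL_anti Twfs_fix U_def by metis
    have "LM (reduct P (T_wfs P)) \<subseteq> LM (PFT P F TF) \<inter> U"
    proof (rule LM_induct)
      fix r assume r: "r \<in> reduct P (T_wfs P)" "pos r \<subseteq> LM (PFT P F TF) \<inter> U"
      have hU: "head r \<in> U" unfolding U_def GL_eq
        using r by (auto intro: LM_closed simp: U_def GL_eq)
      have "r \<in> PFT P F TF" using r hU F Fw TF unfolding PFT_def reduct_def by blast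
      thus "head r \<in> LM (PFT P F TF) \<inter> U" using r hU by (auto intro: LM_closed)
    qed
    hence "U \<subseteq> LM (PFT P F TF)" unfolding U_def GL_eq by blast
    hence "Bop P F \<subseteq> F_wfs P" unfolding Bop_def Fw cmpl_def LM_PFTh TF_def by blast
    thus ?thesis using part1[OF FAt] by blast
  qed
  have inF: "S i \<subseteq> F_wfs P" for i
    by (induction i) (auto simp: S_def intro: step[THEN subsetD])
  have SAt: "S i \<subseteq> At P" for i using inF[of i] Fw by blast
  have mono: "S i \<subseteq> S (Suc i)" for i unfolding S_def using incr by simp
  have ex: "\<exists>i. S i = S (Suc i)"
  proof (rule ccontr)
    assume "\<not> ?thesis"
    hence ne: "S i \<subset> S (Suc i)" for i using mono by blast
    have "i \<le> card (S i)" for i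
    proof (induction i)
      case (Suc i)
      have "card (S i) < card (S (Suc i))"
        using ne[of i] SAt[of "Suc i"] finite_At[OF finP] by (meson psubset_card_mono rev_finite_subset)
      thus ?case using Suc by simp
    qed simp
    moreover have "card (S i) \<le> card (At P)" for i
      using SAt finite_At[OF finP] by (meson card_mono)
    ultimately show False by (metis Suc_n_not_le_n le_trans)
  qed
  have fin: "S i = F_wfs P" if fx: "S i = S (Suc i)" for i
  proof -
    define F where "F = S i"
    have FAt: "F \<subseteq> At P" using SAt F_def by blast
    define V where "V = cmpl P F"
    let ?Q = "PFTh P F (GL P V)"
    have "Bw P \<Delta> F = F" using fx unfolding F_def S_def by simp
    hence "\<Delta> F ?Q \<subseteq> F" unfolding Bw_def V_def by blast
    moreover have "\<Delta> F ?Q \<subseteq> cmpl P F" using W1[OF FAt] PFTh_props[OF finP] by blast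
    ultimately have "\<Delta> F ?Q = {}" unfolding cmpl_def by blast
    hence "V - LM ?Q = {}" using W2[OF FAt] PFTh_props[OF finP] V_def by blast
    hence "V \<subseteq> LM (PFT P F (GL P V))" unfolding LM_PFTh by blast
    also have "\<dots> \<subseteq> GL P (GL P V)" unfolding GL_eq
      by (rule LM_mono) (auto simp: PFT_def reduct_def)
    finally have V: "V \<subseteq> GL P (GL P V)" .
    have "GL P (GL P (GL P V)) \<subseteq> GL P V" using GL_anti[OF V] .
    hence "T_wfs P \<subseteq> GL P V" by (rule Twfs_le)
    hence "GL P (GL P V) \<subseteq> U" unfolding U_def by (rule GL_anti)
    hence "V \<subseteq> U" using V by blast
    hence "F_wfs P \<subseteq> F" using FAt unfolding Fw V_def cmpl_def by blast
    thus ?thesis using inF F_def by blast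
  qed
  have A: "\<forall>F. F \<subseteq> At P \<longrightarrow> F \<subseteq> Bw P \<Delta> F \<and> Bw P \<Delta> F \<subseteq> Bop P F"
    using part1 incr by blast
  show ?thesis
    apply (intro conjI)
    subgoal using A .
    subgoal using inF unfolding S_def by blast
    subgoal using mono unfolding S_def by blast
    subgoal using ex unfolding S_def by blast
    subgoal using fin unfolding S_def by blast
    done
qed

end
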